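(* Let $\beta>0$, $T>0$, $\lambda>0$, put $M=\beta T$, and let $B_M$ satisfy $0<B_M<\beta T$. Let $T_{\text{th}}=\dfrac{M}{\ln(1+M/\lambda)}$ and, for $x\ge 0$, $$P_{e|1}(x)=\sum_{y\in\mathbb{Z}_{\ge 0},\, y<T_{\text{th}}} e^{-(x+\lambda)}\frac{(x+\lambda)^y}{y!}.$$ Consider the optimization problem over real sequences $\{\Delta_i\}_{i=1}^\infty$: $$\min_{\{\Delta_i\}} \sum_{j=1}^{\infty}\frac{1}{2^{j}}P_{e|1}(M+\Delta_j)\quad\text{s.t.}\quad B_M-\sum_{j=1}^{i}\Delta_j\ge 0\ \text{ and }\ \sum_{j=1}^{i}\Delta_j\ge 0\ \text{ for all } i\ge 1.$$ Then for the optimal solution $\{\Delta^*_i\}_{i=1}^\infty$ there exists an index $J$ such that $\Delta^*_j=0$ for all $j>J$; that is, only finitely many of the optimal increments are positive.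
   Context: This is the "no-ISI" adaptive release-duration problem for a molecular transmitter with molecule production rate $\beta$, slot length $T$, storage capacity $B_M=\beta(T-T_M)$; $\Delta_i$ is the increment of the number of released molecules (for bit "1") in state $s_{i-1}$. $P_{e|1}(x)$ is the probability that a Poisson$(x+\lambda)$ count falls below the fixed threshold $T_{\text{th}}$. The paper assumes $M\gg\lambda$, so that $T_{\text{th}}<M$. *)

theory Defs
  imports Complex_Main
begin

definition Tth :: "real \<Rightarrow> real \<Rightarrow> real" where
  "Tth M lam = M / ln (1 + M / lam)"

definition Pe1 :: "real \<Rightarrow> real \<Rightarrow> real \<Rightarrow> real" where
  "Pe1 M lam x = (\<Sum>y\<in>{y::nat. real y < Tth M lam}.
      exp (- (x + lam)) * (x + lam) ^ y / fact y)"

text \<open>Feasibility: increments indexed from 1 (Delta 0 is unused); partial sums in [0, B_M].\<close>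
definition feasible :: "real \<Rightarrow> (nat \<Rightarrow> real) \<Rightarrow> bool" where
  "feasible BM \<Delta> \<longleftrightarrow> (\<forall>i\<ge>1. BM - (\<Sum>j=1..i. \<Delta> j) \<ge> 0 \<and> (\<Sum>j=1..i. \<Delta> j) \<ge> 0)"

definition objective :: "real \<Rightarrow> real \<Rightarrow> (nat \<Rightarrow> real) \<Rightarrow> real" where
  "objective M lam \<Delta> = (\<Sum>j. (1/2) ^ (Suc j) * Pe1 M lam (M + \<Delta> (Suc j)))"

end

theory Submission
  imports Defs
begin

definition pp :: "nat \<Rightarrow> real \<Rightarrow> real" where "pp n x = exp (- x) * x ^ n / fact n"
definition QQ :: "nat \<Rightarrow> real \<Rightarrow> real" where "QQ N x = (\<Sum>y<N. exp (- x) * x ^ y / fact y)"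

lemma aux: fixes A B F k :: real assumes "0 < F" "0 < k"
  shows "(- A + B * k) / (k * F) = - A / (k * F) + B / F"
  using assms by (simp add: field_simps)

lemma QQ_deriv: "(QQ (Suc n) has_real_derivative (- pp n x)) (at x)"
proof (induction n)
  case 0
  have "QQ (Suc 0) = (\<lambda>x. exp (- x))" by (simp add: QQ_def fun_eq_iff)
  then show ?case by (auto simp: pp_def intro!: derivative_eq_intros)
next
  case (Suc n)
  have e: "QQ (Suc (Suc n)) = (\<lambda>x. QQ (Suc n) x + exp (- x) * x ^ Suc n / fact (Suc n))"
    by (simp add: QQ_def fun_eq_iff)
  have d: "((\<lambda>x. exp (- x) * x ^ Suc n / fact (Suc n)) has_real_derivative
      (- exp (- x) * x ^ Suc n / fact (Suc n) + exp (- x) * x ^ n / fact n)) (at x)"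
  proof -
    have d1: "((\<lambda>x. exp (- x)) has_real_derivative - exp (- x)) (at x)"
      by (auto intro!: derivative_eq_intros)
    have d2: "((\<lambda>x. x ^ Suc n) has_real_derivative real (Suc n) * x ^ n) (at x)"
      using DERIV_pow[of "Suc n" x] by simp
    have "((\<lambda>x. exp (- x) * x ^ Suc n / fact (Suc n)) has_real_derivative
      ((- exp (- x) * x ^ Suc n + exp (- x) * (real (Suc n) * x ^ n)) / fact (Suc n))) (at x)"
      using DERIV_cdivide[OF DERIV_mult[OF d1 d2], of "fact (Suc n)"] by (simp add: algebra_simps)
    moreover have "(- exp (- x) * x ^ Suc n + exp (- x) * (real (Suc n) * x ^ n)) / fact (Suc n)
       = - exp (- x) * x ^ Suc n / fact (Suc n) + exp (- x) * x ^ n / fact n"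
    proof -
      have p: "(0::real) < fact n" "(0::real) < real (Suc n)" by auto
      have "(- exp (- x) * x ^ Suc n + exp (- x) * (real (Suc n) * x ^ n)) / fact (Suc n)
        = (- (exp (- x) * x ^ Suc n) + (exp (- x) * x ^ n) * real (Suc n)) / (real (Suc n) * fact n)"
        by (simp only: fact_Suc of_nat_mult) (simp add: algebra_simps)
      also have "\<dots> = - (exp (- x) * x ^ Suc n) / (real (Suc n) * fact n) + (exp (- x) * x ^ n) / fact n"
        using aux[OF p] .
      also have "\<dots> = - exp (- x) * x ^ Suc n / fact (Suc n) + exp (- x) * x ^ n / fact n"
        by (simp only: fact_Suc of_nat_mult)
      finally show ?thesis .
    qed
    ultimately show ?thesis by simp
  qed
  show ?case unfolding e using DERIV_add[OF Suc d] by (simp add: pp_def)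
qed

lemma pp_pos: "0 < x \<Longrightarrow> 0 < pp n x" by (simp add: pp_def)

lemma pp_exp: "0 < x \<Longrightarrow> pp n x = exp (real n * ln x - x) / fact n"
  by (simp add: pp_def exp_diff exp_of_nat_mult exp_minus field_simps)

lemma pp_dec: assumes "real n \<le> x" "0 < x" "x \<le> y" shows "pp n y \<le> pp n x"
proof -
  have "ln (y / x) \<le> y / x - 1" using assms by (intro ln_le_minus_one) auto
  hence l: "ln y - ln x \<le> (y - x) / x" using assms by (simp add: ln_div diff_divide_distrib)
  have "real n * (ln y - ln x) \<le> real n * ((y - x) / x)" using l by (intro mult_left_mono) auto
  also have "\<dots> = (real n / x) * (y - x)" by simp
  also have "\<dots> \<le> 1 * (y - x)" using assms by (intro mult_right_mono) auto
  finally have "real n * ln y - y \<le> real n * ln x - x" by (simp add: algebra_simps)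
  thus ?thesis using assms by (simp add: pp_exp divide_right_mono)
qed

lemma pp_inc: assumes "0 < x" "x \<le> y" "y \<le> real n" shows "pp n x \<le> pp n y"
proof -
  have "ln (x / y) \<le> x / y - 1" using assms by (intro ln_le_minus_one) auto
  hence l: "(y - x) / y \<le> ln y - ln x" using assms by (simp add: ln_div diff_divide_distrib)
  have "1 * (y - x) \<le> (real n / y) * (y - x)" using assms by (intro mult_right_mono) auto
  also have "\<dots> = real n * ((y - x) / y)" by simp
  also have "\<dots> \<le> real n * (ln y - ln x)" using l by (intro mult_left_mono) auto
  finally have "real n * ln x - x \<le> real n * ln y - y" by (simp add: algebra_simps)
  thus ?thesis using assms by (simp add: pp_exp divide_right_mono)
qed

lemma QQ_mvt: assumes "a < b" shows "\<exists>z. a < z \<and> z < b \<and> QQ (Suc n) a - QQ (Suc n) b = (b - a) * pp n z"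
proof -
  obtain z where "a < z" "z < b" "QQ (Suc n) b - QQ (Suc n) a = (b - a) * (- pp n z)"
    using MVT2[OF assms, of "QQ (Suc n)" "\<lambda>x. - pp n x"] QQ_deriv by blast
  thus ?thesis by (intro exI[of _ z]) (auto simp: algebra_simps)
qed

lemma QQ_lower: assumes "a \<le> b" "\<And>z. a < z \<Longrightarrow> z < b \<Longrightarrow> c \<le> pp n z"
  shows "c * (b - a) \<le> QQ (Suc n) a - QQ (Suc n) b"
proof (cases "a = b")
  case False
  then obtain z where "a < z" "z < b" "QQ (Suc n) a - QQ (Suc n) b = (b - a) * pp n z"
    using QQ_mvt assms by (meson order_le_imp_less_or_eq)
  thus ?thesis using assms(2)[of z] by (simp add: mult.commute mult_right_mono)
qed simp

lemma QQ_upper: assumes "a \<le> b" "\<And>z. a < z \<Longrightarrow> z < b \<Longrightarrow> pp n z \<le> c"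
  shows "QQ (Suc n) a - QQ (Suc n) b \<le> c * (b - a)"
proof (cases "a = b")
  case False
  then obtain z where "a < z" "z < b" "QQ (Suc n) a - QQ (Suc n) b = (b - a) * pp n z"
    using QQ_mvt assms by (meson order_le_imp_less_or_eq)
  thus ?thesis using assms(2)[of z] by (simp add: mult.commute mult_right_mono)
qed simp

lemma QQ_bounds: assumes "0 \<le> x" shows "0 \<le> QQ (Suc n) x \<and> QQ (Suc n) x \<le> 1"
proof
  show "0 \<le> QQ (Suc n) x" using assms unfolding QQ_def by (intro sum_nonneg) auto
  have "0 * (x - 0) \<le> QQ (Suc n) 0 - QQ (Suc n) x"
    using assms by (intro QQ_lower) (auto simp: pp_def)
  moreover have "QQ (Suc n) 0 = 1" unfolding QQ_def by (simp add: sum.lessThan_Suc_shift del: sum.lessThan_Suc)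
  ultimately show "QQ (Suc n) x \<le> 1" by simp
qed

lemma suminf_change:
  fixes a b :: "nat \<Rightarrow> real"
  assumes "summable a" "finite F" "\<And>j. j \<notin> F \<Longrightarrow> b j = a j"
  shows "suminf b = suminf a + (\<Sum>j\<in>F. b j - a j)"
proof -
  let ?d = "\<lambda>j. if j \<in> F then b j - a j else 0"
  have sd: "summable ?d" by (rule summable_finite[OF assms(2)]) auto
  have "suminf ?d = (\<Sum>j\<in>F. ?d j)" by (rule suminf_finite[OF assms(2)]) auto
  also have "\<dots> = (\<Sum>j\<in>F. b j - a j)" by simp
  finally have e: "suminf ?d = (\<Sum>j\<in>F. b j - a j)" .
  have "b = (\<lambda>j. a j + ?d j)" using assms(3) by (auto simp: fun_eq_iff)
  hence "suminf b = suminf (\<lambda>j. a j + ?d j)" by simp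
  also have "\<dots> = suminf a + suminf ?d" using suminf_add[OF assms(1) sd] by simp
  finally show ?thesis using e by simp
qed

lemma pair_obj:
  fixes G :: "real \<Rightarrow> real" and D D' :: "nat \<Rightarrow> real"
  assumes "summable (\<lambda>j. (1/2::real)^Suc j * G (D (Suc j)))" "1 \<le> i" "i < k"
    "\<And>m. m \<noteq> i \<Longrightarrow> m \<noteq> k \<Longrightarrow> D' m = D m"
  shows "(\<Sum>j. (1/2::real)^Suc j * G (D' (Suc j))) = (\<Sum>j. (1/2::real)^Suc j * G (D (Suc j)))
     + (1/2)^i * (G (D' i) - G (D i)) + (1/2)^k * (G (D' k) - G (D k))"
proof -
  have "(\<Sum>j. (1/2::real)^Suc j * G (D' (Suc j))) = (\<Sum>j. (1/2::real)^Suc j * G (D (Suc j)))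
     + (\<Sum>j\<in>{i-1,k-1}. (1/2::real)^Suc j * G (D' (Suc j)) - (1/2::real)^Suc j * G (D (Suc j)))"
    by (rule suminf_change[OF assms(1)]) (use assms in \<open>auto intro!: assms(4)\<close>)
  also have "\<dots> = (\<Sum>j. (1/2::real)^Suc j * G (D (Suc j)))
     + (1/2)^i * (G (D' i) - G (D i)) + (1/2)^k * (G (D' k) - G (D k))"
  proof -
    have e1: "Suc (i-1) = i" "Suc (k-1) = k" "i-1 \<noteq> k-1" using assms(2,3) by auto
    show ?thesis by (simp only: sum.insert e1 finite.intros insert_iff empty_iff sum.empty simp_thms) (simp add: algebra_simps)
  qed
  finally show ?thesis .
qed

lemma psum_move:
  fixes D :: "nat \<Rightarrow> real"
  assumes "1 \<le> i" "i < k"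
  shows "(\<Sum>j=1..m. D j + (if j = i then e else 0) - (if j = k then e else 0))
     = (\<Sum>j=1..m. D j) + (if i \<le> m \<and> m < k then e else 0)"
  using assms by (simp add: sum.distrib sum_subtractf sum.delta)

lemma psum_single:
  fixes D :: "nat \<Rightarrow> real"
  assumes "1 \<le> i"
  shows "(\<Sum>j=1..m. D j + (if j = i then e else 0)) = (\<Sum>j=1..m. D j) + (if i \<le> m then e else 0)"
  using assms by (simp add: sum.distrib sum.delta)

theorem lemma2:
  fixes \<beta> T lam BM :: real and \<Delta> :: "nat \<Rightarrow> real"
  assumes "\<beta> > 0" and "T > 0" and "lam > 0"
    and "0 < BM" and "BM < \<beta> * T"
    and "feasible BM \<Delta>"
    and "\<forall>\<Delta>'. feasible BM \<Delta>' \<longrightarrow> objective (\<beta> * T) lam \<Delta> \<le> objective (\<beta> * T) lam \<Delta>'"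
  shows "\<exists>J. \<forall>j>J. \<Delta> j = 0"
proof -
  define M where "M = \<beta> * T"
  have M0: "0 < M" using assms by (simp add: M_def)
  have BM: "0 < BM" "BM < M" using assms by (auto simp: M_def)
  have lam0: "0 < lam" using assms by simp
  define th where "th = Tth M lam"
  define N where "N = nat \<lceil>th\<rceil>"
  define \<mu>0 where "\<mu>0 = M + lam"
  have q: "1 + M / lam = \<mu>0 / lam" using lam0 by (simp add: \<mu>0_def field_simps)
  have lnpos: "0 < ln (\<mu>0 / lam)" unfolding q[symmetric] using M0 lam0 by (intro ln_gt_zero) simp
  have th_eq: "th = M / ln (\<mu>0 / lam)" by (simp add: th_def Tth_def q)
  have th0: "0 < th" unfolding th_eq using M0 lnpos by simp
  have N1: "1 \<le> N" unfolding N_def using th0 by (simp add: Suc_le_eq)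
  define n where "n = N - 1"
  have Nn: "N = Suc n" using N1 n_def by simp
  have set_eq: "{y::nat. real y < th} = {..<N}"
    unfolding N_def by (auto, (meson linorder_not_less nat_ceiling_le_eq)+)
  have n_lt: "real n < th"
  proof -
    have "real (nat \<lceil>th\<rceil> - 1) < th" using th0 by linarith
    thus ?thesis by (simp add: n_def N_def)
  qed
  have Pe_eq: "\<And>x. Pe1 M lam x = QQ N (x + lam)"
    unfolding Pe1_def QQ_def th_def[symmetric] set_eq ..
  have th_le: "th \<le> \<mu>0"
  proof -
    have "ln (lam / \<mu>0) \<le> lam / \<mu>0 - 1" using lam0 M0 by (intro ln_le_minus_one) (simp add: \<mu>0_def)
    also have "\<dots> = - (M / \<mu>0)" using lam0 M0 by (simp add: \<mu>0_def field_simps)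
    finally have "M / \<mu>0 \<le> ln (\<mu>0 / lam)" using lam0 M0 by (simp add: ln_div \<mu>0_def)
    hence "M \<le> \<mu>0 * ln (\<mu>0 / lam)" using lam0 M0 by (simp add: \<mu>0_def field_simps)
    thus ?thesis unfolding th_eq using lnpos by (simp add: divide_le_eq)
  qed
  have key: "real n * ln (\<mu>0 / lam) < M"
    using n_lt lnpos unfolding th_eq by (simp add: less_divide_eq)
  have mu0pos: "0 < \<mu>0" using M0 lam0 by (simp add: \<mu>0_def)
  have n_le: "real n \<le> \<mu>0" using n_lt th_le by simp
  define c where "c = pp n \<mu>0"
  define c' where "c' = pp n (\<mu>0 + BM)"
  have cpos: "0 < c" unfolding c_def using mu0pos by (rule pp_pos)
  have c'pos: "0 < c'" unfolding c'_def using mu0pos BM by (intro pp_pos) simp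
  have pz: "c \<le> pp n z" if "lam < z" "z \<le> \<mu>0" for z
  proof (cases "real n \<le> z")
    case True
    then show ?thesis unfolding c_def using that lam0 by (intro pp_dec) auto
  next
    case False
    have "pp n lam \<le> pp n z" using that False lam0 by (intro pp_inc) auto
    moreover have "pp n \<mu>0 \<le> pp n lam"
    proof -
      have "real n * (ln \<mu>0 - ln lam) \<le> \<mu>0 - lam" using key lam0 mu0pos
        by (simp add: ln_div \<mu>0_def)
      hence "real n * ln \<mu>0 - \<mu>0 \<le> real n * ln lam - lam" by (simp add: algebra_simps)
      thus ?thesis using lam0 mu0pos by (simp add: pp_exp divide_right_mono)
    qed
    ultimately show ?thesis unfolding c_def by simp
  qed
  have G1: "c * (b - a) \<le> QQ N a - QQ N b" if "lam < a" "a \<le> b" "b \<le> \<mu>0" for a b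
    unfolding Nn using that by (intro QQ_lower pz) auto
  have G2: "QQ N a - QQ N b \<le> c * (b - a)" if "\<mu>0 \<le> a" "a \<le> b" for a b
    unfolding Nn c_def using that n_le mu0pos by (intro QQ_upper pp_dec) auto
  have G3: "c' * (b - a) \<le> QQ N a - QQ N b" if "\<mu>0 \<le> a" "a \<le> b" "b \<le> \<mu>0 + BM" for a b
    unfolding Nn c'_def using that n_le mu0pos by (intro QQ_lower pp_dec) auto
  define G where "G x = QQ N (\<mu>0 + x)" for x
  have objG: "objective (\<beta> * T) lam D = (\<Sum>j. (1/2::real)^Suc j * G (D (Suc j)))" for D
    unfolding objective_def M_def[symmetric] Pe_eq G_def \<mu>0_def by (simp add: algebra_simps)
  have opt: "(\<Sum>j. (1/2::real)^Suc j * G (\<Delta> (Suc j))) \<le> (\<Sum>j. (1/2::real)^Suc j * G (D (Suc j)))"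
    if "feasible BM D" for D using assms(7) that by (simp add: objG)
  define S where "S m = (\<Sum>j=1..m. \<Delta> j)" for m
  have S_Suc: "S (Suc m) = S m + \<Delta> (Suc m)" for m by (simp add: S_def)
  have S0: "S 0 = 0" by (simp add: S_def)
  have Sb: "0 \<le> S m \<and> S m \<le> BM" for m
  proof (cases "m = 0")
    case True then show ?thesis using BM by (simp add: S0)
  next
    case False then show ?thesis using assms(6) by (auto simp: feasible_def S_def)
  qed
  have Dbd: "- BM \<le> \<Delta> m \<and> \<Delta> m \<le> BM" if "1 \<le> m" for m
  proof -
    obtain m' where "m = Suc m'" using \<open>1 \<le> m\<close> by (cases m) auto
    then show ?thesis using S_Suc[of m'] Sb[of m] Sb[of m'] by auto
  qed
  have Gb: "0 \<le> G x \<and> G x \<le> 1" if "- BM \<le> x" for x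
    unfolding G_def Nn using that BM lam0 by (intro QQ_bounds) (simp add: \<mu>0_def)
  have sumD: "summable (\<lambda>j. (1/2::real)^Suc j * G (\<Delta> (Suc j)))"
  proof (rule summable_comparison_test)
    show "\<exists>N. \<forall>j\<ge>N. norm ((1/2::real)^Suc j * G (\<Delta> (Suc j))) \<le> (1/2)^Suc j"
      using Gb Dbd by (auto intro!: exI[of _ 0] simp: abs_mult)
    show "summable (\<lambda>j. (1/2::real)^Suc j)"
      using summable_geometric[of "1/2::real"] by (simp add: summable_mult)
  qed
  have feasI: "feasible BM D" if "\<And>m. 1 \<le> m \<Longrightarrow> 0 \<le> (\<Sum>j=1..m. D j) \<and> (\<Sum>j=1..m. D j) \<le> BM" for D
    using that by (auto simp: feasible_def)
  have Glam: "lam < \<mu>0 + x" if "- BM \<le> x" for x using that BM by (simp add: \<mu>0_def)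
  have nonneg: "0 \<le> \<Delta> j" if j1: "1 \<le> j" for j
  proof (rule ccontr)
    assume neg: "\<not> 0 \<le> \<Delta> j"
    show False
    proof (cases "\<exists>k>j. 0 < \<Delta> k")
      case False
      define D' where "D' = (\<lambda>m. \<Delta> m + (if m = j then - \<Delta> j else 0))"
      have S': "(\<Sum>l=1..m. D' l) = S m + (if j \<le> m then - \<Delta> j else 0)" for m
        unfolding D'_def S_def using psum_single[OF j1] by simp
      have mono: "S m \<le> S j" if "j \<le> m" for m
        using that
      proof (induction m rule: dec_induct)
        case (step m)
        then show ?case using S_Suc[of m] False by (metis add_le_same_cancel1 less_Suc_eq_le linorder_not_less order.trans)
      qed simp
      have Sj: "S j = S (j-1) + \<Delta> j" using S_Suc[of "j-1"] j1 by simp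
      have "feasible BM D'"
      proof (rule feasI)
        fix m :: nat assume "1 \<le> m"
        show "0 \<le> (\<Sum>l=1..m. D' l) \<and> (\<Sum>l=1..m. D' l) \<le> BM"
          using Sb[of m] Sb[of "j-1"] mono[of m] Sj neg unfolding S' by auto
      qed
      hence o: "(\<Sum>j. (1/2::real)^Suc j * G (\<Delta> (Suc j))) \<le> (\<Sum>j. (1/2::real)^Suc j * G (D' (Suc j)))"
        by (rule opt)
      have e: "(\<Sum>j. (1/2::real)^Suc j * G (D' (Suc j))) = (\<Sum>j. (1/2::real)^Suc j * G (\<Delta> (Suc j)))
        + (1/2)^j * (G (D' j) - G (\<Delta> j)) + (1/2)^(Suc j) * (G (D' (Suc j)) - G (\<Delta> (Suc j)))"
        by (rule pair_obj[where G=G and D=\<Delta>, OF sumD j1]) (auto simp: D'_def)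
      have "c * (\<mu>0 - (\<mu>0 + \<Delta> j)) \<le> QQ N (\<mu>0 + \<Delta> j) - QQ N \<mu>0"
        using Dbd[OF j1] neg Glam[of "\<Delta> j"] by (intro G1) auto
      moreover have "0 < c * (- \<Delta> j)" using cpos neg by (intro mult_pos_pos) auto
      ultimately have "G (D' j) - G (\<Delta> j) < 0" unfolding G_def D'_def by simp
      hence "(1/2::real)^j * (G (D' j) - G (\<Delta> j)) < 0" by (simp add: mult_pos_neg)
      moreover have "D' (Suc j) = \<Delta> (Suc j)" by (simp add: D'_def)
      ultimately show False using o e by simp
    next
      case True
      then obtain k0 where k0: "j < k0" "0 < \<Delta> k0" by auto
      define P where "P d \<longleftrightarrow> (\<exists>a b. 1 \<le> a \<and> b = a + d \<and> \<Delta> a < 0 \<and> 0 < \<Delta> b)" for d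
      have "P (k0 - j)" unfolding P_def using j1 neg k0 by (intro exI[of _ j] exI[of _ k0]) auto
      then obtain d where Pd: "P d" and dmin: "\<And>d'. d' < d \<Longrightarrow> \<not> P d'"
        using exists_least_iff[of P] by blast
      then obtain i k where i1: "1 \<le> i" and kd: "k = i + d" and ni: "\<Delta> i < 0" and pk: "0 < \<Delta> k"
        unfolding P_def by blast
      have ik: "i < k" using kd ni pk by (cases "d = 0") auto
      have zero: "\<Delta> m = 0" if "i < m" "m < k" for m
      proof (rule ccontr)
        assume "\<Delta> m \<noteq> 0"
        hence "\<Delta> m < 0 \<or> 0 < \<Delta> m" by auto
        then show False
        proof
          assume "\<Delta> m < 0"
          hence "P (k - m)" unfolding P_def using that i1 pk by (intro exI[of _ m] exI[of _ k]) auto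
          moreover have "k - m < d" using that kd by linarith
          ultimately show False using dmin by blast
        next
          assume "0 < \<Delta> m"
          hence "P (m - i)" unfolding P_def using that i1 ni by (intro exI[of _ i] exI[of _ m]) auto
          moreover have "m - i < d" using that kd by linarith
          ultimately show False using dmin by blast
        qed
      qed
      have Sconst: "S m = S i" if "i \<le> m" "m < k" for m
        using that
      proof (induction m rule: dec_induct)
        case (step m)
        then show ?case using S_Suc[of m] zero[of "Suc m"] by simp
      qed simp
      have Sk: "S k = S i + \<Delta> k"
        using S_Suc[of "k-1"] Sconst[of "k-1"] ik by simp
      define e where "e = min (- \<Delta> i) (\<Delta> k)"
      have e0: "0 < e" using ni pk by (simp add: e_def)
      define D' where "D' = (\<lambda>m. \<Delta> m + (if m = i then e else 0) - (if m = k then e else 0))"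
      have S': "(\<Sum>l=1..m. D' l) = S m + (if i \<le> m \<and> m < k then e else 0)" for m
        unfolding D'_def S_def using psum_move[OF i1 ik] by simp
      have "feasible BM D'"
      proof (rule feasI)
        fix m :: nat assume "1 \<le> m"
        show "0 \<le> (\<Sum>l=1..m. D' l) \<and> (\<Sum>l=1..m. D' l) \<le> BM"
          using Sb[of m] Sb[of k] Sconst[of m] Sk e0 unfolding S' by (auto simp: e_def)
      qed
      hence o: "(\<Sum>j. (1/2::real)^Suc j * G (\<Delta> (Suc j))) \<le> (\<Sum>j. (1/2::real)^Suc j * G (D' (Suc j)))"
        by (rule opt)
      have ea: "(\<Sum>j. (1/2::real)^Suc j * G (D' (Suc j))) = (\<Sum>j. (1/2::real)^Suc j * G (\<Delta> (Suc j)))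
        + (1/2)^i * (G (D' i) - G (\<Delta> i)) + (1/2)^k * (G (D' k) - G (\<Delta> k))"
        by (rule pair_obj[where G=G and D=\<Delta>, OF sumD i1 ik]) (auto simp: D'_def)
      have "c * ((\<mu>0 + (\<Delta> i + e)) - (\<mu>0 + \<Delta> i)) \<le> QQ N (\<mu>0 + \<Delta> i) - QQ N (\<mu>0 + (\<Delta> i + e))"
        using Dbd[OF i1] e0 Glam[of "\<Delta> i"] by (intro G1) (auto simp: e_def)
      hence g1: "G (D' i) - G (\<Delta> i) \<le> - (c * e)" using ik unfolding G_def D'_def by simp
      have "QQ N (\<mu>0 + (\<Delta> k - e)) - QQ N (\<mu>0 + \<Delta> k) \<le> c * ((\<mu>0 + \<Delta> k) - (\<mu>0 + (\<Delta> k - e)))"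
        using e0 by (intro G2) (auto simp: e_def)
      hence g2: "G (D' k) - G (\<Delta> k) \<le> c * e" using ik unfolding G_def D'_def by simp
      have w: "(1/2::real)^k < (1/2)^i" using ik by (intro power_strict_decreasing) auto
      have "(1/2::real)^i * (G (D' i) - G (\<Delta> i)) + (1/2)^k * (G (D' k) - G (\<Delta> k))
          \<le> (1/2::real)^i * (- (c * e)) + (1/2)^k * (c * e)"
        using g1 g2 by (intro add_mono mult_left_mono) auto
      also have "\<dots> = ((1/2::real)^k - (1/2)^i) * (c * e)" by (simp add: algebra_simps)
      also have "\<dots> < 0" using w cpos e0 by (intro mult_neg_pos) auto
      finally show False using o ea by simp
    qed
  qed
  obtain r where r: "c / c' < 2 ^ r" using real_arch_pow[of "2::real" "c / c'"] by auto
  have r': "c < 2 ^ r * c'" using r c'pos by (simp add: divide_less_eq)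
  have Smono: "S m \<le> S m'" if "m \<le> m'" for m m'
    using that
  proof (induction m' rule: dec_induct)
    case (step m')
    then show ?case using S_Suc[of m'] nonneg[of "Suc m'"] by simp
  qed simp
  show ?thesis
  proof (intro exI[of _ "Suc r"] allI impI)
    fix k assume kr: "Suc r < k"
    show "\<Delta> k = 0"
    proof (rule ccontr)
      assume "\<Delta> k \<noteq> 0"
      hence pk: "0 < \<Delta> k" using nonneg[of k] kr by simp
      have i1: "1 \<le> (1::nat)" by simp
      have ik: "1 < k" using kr by simp
      define D' where "D' = (\<lambda>m. \<Delta> m + (if m = 1 then \<Delta> k else 0) - (if m = k then \<Delta> k else 0))"
      have S': "(\<Sum>l=1..m. D' l) = S m + (if 1 \<le> m \<and> m < k then \<Delta> k else 0)" for m
        unfolding D'_def S_def using psum_move[OF i1 ik] by simp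
      have Sk: "S k = S (k-1) + \<Delta> k" using S_Suc[of "k-1"] ik by simp
      have "feasible BM D'"
      proof (rule feasI)
        fix m :: nat assume "1 \<le> m"
        show "0 \<le> (\<Sum>l=1..m. D' l) \<and> (\<Sum>l=1..m. D' l) \<le> BM"
        proof (cases "m < k")
          case True
          then have "S m \<le> S (k-1)" by (intro Smono) simp
          then show ?thesis using Sb[of m] Sb[of k] Sk pk True unfolding S' by auto
        qed (use Sb[of m] S' in auto)
      qed
      hence o: "(\<Sum>j. (1/2::real)^Suc j * G (\<Delta> (Suc j))) \<le> (\<Sum>j. (1/2::real)^Suc j * G (D' (Suc j)))"
        by (rule opt)
      have ea: "(\<Sum>j. (1/2::real)^Suc j * G (D' (Suc j))) = (\<Sum>j. (1/2::real)^Suc j * G (\<Delta> (Suc j)))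
        + (1/2)^1 * (G (D' 1) - G (\<Delta> 1)) + (1/2)^k * (G (D' k) - G (\<Delta> k))"
        by (rule pair_obj[where G=G and D=\<Delta>, OF sumD i1 ik]) (auto simp: D'_def)
      have S1: "S 1 = \<Delta> 1" using S_Suc[of 0] S0 by simp
      have "S 1 \<le> S (k-1)" using ik by (intro Smono) simp
      hence b1: "\<Delta> 1 + \<Delta> k \<le> BM" using S1 Sk Sb[of k] by simp
      have "c' * ((\<mu>0 + (\<Delta> 1 + \<Delta> k)) - (\<mu>0 + \<Delta> 1)) \<le> QQ N (\<mu>0 + \<Delta> 1) - QQ N (\<mu>0 + (\<Delta> 1 + \<Delta> k))"
        using nonneg[of 1] pk b1 by (intro G3) auto
      hence g1: "G (D' 1) - G (\<Delta> 1) \<le> - (c' * \<Delta> k)" using ik unfolding G_def D'_def by simp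
      have "QQ N \<mu>0 - QQ N (\<mu>0 + \<Delta> k) \<le> c * ((\<mu>0 + \<Delta> k) - \<mu>0)"
        using pk by (intro G2) auto
      hence g2: "G (D' k) - G (\<Delta> k) \<le> c * \<Delta> k" using ik unfolding G_def D'_def by simp
      have "c < 2 ^ (k - 1) * c'"
      proof -
        have "(2::real) ^ r \<le> 2 ^ (k - 1)" using kr by (intro power_increasing) auto
        thus ?thesis using r' c'pos by (smt (verit) mult_right_mono)
      qed
      hence "(1/2::real)^k * c < (1/2)^k * (2 ^ (k - 1) * c')" by (intro mult_strict_left_mono) auto
      also have "(1/2::real)^k * (2 ^ (k - 1) * c') = (1/2) * c'"
      proof -
        have "k = Suc (k - 1)" using ik by simp
        hence "(1/2::real)^k * 2 ^ (k - 1) = (1/2) * ((1/2) * 2) ^ (k - 1)"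
          by (metis power_Suc power_mult_distrib mult.assoc)
        thus ?thesis by simp
      qed
      finally have w: "(1/2::real)^k * c < (1/2) * c'" .
      have "(1/2::real)^1 * (G (D' 1) - G (\<Delta> 1)) + (1/2)^k * (G (D' k) - G (\<Delta> k))
          \<le> (1/2::real)^1 * (- (c' * \<Delta> k)) + (1/2)^k * (c * \<Delta> k)"
        using g1 g2 by (intro add_mono mult_left_mono) auto
      also have "\<dots> = ((1/2::real)^k * c - (1/2) * c') * \<Delta> k" by (simp add: algebra_simps)
      also have "\<dots> < 0" using w pk by (intro mult_neg_pos) auto
      finally show False using o ea by simp
    qed
  qed
qed

end
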